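(* There exist $\rho_0>0$ and $K_0\ge1$ (depending only on $R$) such that for every $\ell=\ell_{(a,b,c,d)}\in\mathcal{L}_{SL_2}$, the map $F_\ell:\mathcal{L}_{SL_2}\to\mathbb{R}^3$, $F_\ell(\ell_{(a',b',c',d')})=(A,B,C)$ with $$A=(c,d)\cdot(d',-c'),\quad B=(a,b,c,d)\cdot(d',-c',b',-a'),\quad C=(a,b)\cdot(b',-a'),$$ is bilipschitz on $\{\ell'\in\mathcal{L}_{SL_2}: d(\ell,\ell')<\rho_0\}$ with bilipschitz constant at most $K_0$.
   Context: For $(a,b,c,d)\in\mathbb{R}^4$ with $ad-bc=1$, $\ell_{(a,b,c,d)}=\{(a,b,0)+s(c,d,1):s\in\mathbb{R}\}$; $\mathcal{L}_{SL_2}$ is the set of such lines, each identified with its parameter $(a,b,c,d)\in\mathbb{R}^4$, and $d(\cdot,\cdot)$ is the Euclidean distance between parameters (bilipschitz is with respect to this distance). A number $R\ge1$ is fixed and only lines whose parameter lies in $B(0,R)\subset\mathbb{R}^4$ are considered (i.e. $\mathcal{L}_{SL_2}$ stands for $\mathcal{L}_{SL_2}\cap B(0,R)$). *)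

theory Defs
  imports "HOL-Analysis.Analysis"
begin

text \<open>Parameters (a,b,c,d) of lines in L_SL2; the product type carries the Euclidean
  metric of R^4 (dist on products is the l2-combination of component distances).\<close>
type_synonym param = "real \<times> real \<times> real \<times> real"

definition L_SL2 :: "real \<Rightarrow> param set" where
  "L_SL2 R = {(a,b,c,d). a*d - b*c = 1 \<and> norm (a,b,c,d) < R}"

definition Fmap :: "param \<Rightarrow> param \<Rightarrow> real \<times> real \<times> real" where
  "Fmap l l' = (case l of (a,b,c,d) \<Rightarrow> case l' of (a',b',c',d') \<Rightarrow>
     (c*d' - d*c', a*d' - b*c' + c*b' - d*a', a*b' - b*a'))"

definition bilipschitz_on :: "real \<Rightarrow> 'a::metric_space set \<Rightarrow> ('a \<Rightarrow> 'b::metric_space) \<Rightarrow> bool" where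
  "bilipschitz_on K S f \<longleftrightarrow>
     (\<forall>x\<in>S. \<forall>y\<in>S. dist x y / K \<le> dist (f x) (f y) \<and> dist (f x) (f y) \<le> K * dist x y)"

end

theory Submission
  imports Defs
begin

lemma norm4: "norm ((v1,v2,v3,v4)::param) = sqrt (v1^2+v2^2+v3^2+v4^2)"
  by (simp add: norm_prod_def add.assoc)
lemma norm3: "norm ((v1,v2,v3)::real\<times>real\<times>real) = sqrt (v1^2+v2^2+v3^2)"
  by (simp add: norm_prod_def add.assoc)
lemma sqrt_ge4: "\<bar>v1\<bar> \<le> sqrt (v1^2+v2^2+v3^2+v4^2)"
  by (rule real_le_rsqrt) (simp add: )
lemma sqrt_le4: "sqrt (v1^2+v2^2+v3^2+v4^2) \<le> \<bar>v1\<bar>+\<bar>v2\<bar>+\<bar>v3\<bar>+\<bar>v4\<bar>"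
proof (rule real_le_lsqrt)
  have "0 \<le> \<bar>v1\<bar>*\<bar>v2\<bar>" "0 \<le> \<bar>v1\<bar>*\<bar>v3\<bar>" "0 \<le> \<bar>v1\<bar>*\<bar>v4\<bar>" "0 \<le> \<bar>v2\<bar>*\<bar>v3\<bar>" "0 \<le> \<bar>v2\<bar>*\<bar>v4\<bar>" "0 \<le> \<bar>v3\<bar>*\<bar>v4\<bar>" by auto
  then show "v1^2+v2^2+v3^2+v4^2 \<le> (\<bar>v1\<bar>+\<bar>v2\<bar>+\<bar>v3\<bar>+\<bar>v4\<bar>)^2"
    unfolding power2_eq_square by (simp add: algebra_simps)
qed auto

lemma comp4:
  "\<bar>v1\<bar> \<le> norm ((v1,v2,v3,v4)::param)" "\<bar>v2\<bar> \<le> norm ((v1,v2,v3,v4)::param)"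
  "\<bar>v3\<bar> \<le> norm ((v1,v2,v3,v4)::param)" "\<bar>v4\<bar> \<le> norm ((v1,v2,v3,v4)::param)"
  unfolding norm4 by (rule real_le_rsqrt; simp)+

lemma comp3:
  "\<bar>v1\<bar> \<le> norm ((v1,v2,v3)::real\<times>real\<times>real)" "\<bar>v2\<bar> \<le> norm ((v1,v2,v3)::real\<times>real\<times>real)"
  "\<bar>v3\<bar> \<le> norm ((v1,v2,v3)::real\<times>real\<times>real)"
  unfolding norm3 by (rule real_le_rsqrt; simp)+

lemma comp4_lt:
  assumes "norm ((v1,v2,v3,v4)::param) < r"
  shows "\<bar>v1\<bar> \<le> r" "\<bar>v2\<bar> \<le> r" "\<bar>v3\<bar> \<le> r" "\<bar>v4\<bar> \<le> r"
proof -
  have c: "\<bar>v1\<bar> \<le> norm ((v1,v2,v3,v4)::param)" "\<bar>v2\<bar> \<le> norm ((v1,v2,v3,v4)::param)"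
    "\<bar>v3\<bar> \<le> norm ((v1,v2,v3,v4)::param)" "\<bar>v4\<bar> \<le> norm ((v1,v2,v3,v4)::param)"
    by (rule comp4)+
  show "\<bar>v1\<bar> \<le> r" using c(1) assms by linarith
  show "\<bar>v2\<bar> \<le> r" using c(2) assms by linarith
  show "\<bar>v3\<bar> \<le> r" using c(3) assms by linarith
  show "\<bar>v4\<bar> \<le> r" using c(4) assms by linarith
qed

lemma norm4_le: "norm ((v1,v2,v3,v4)::param) \<le> \<bar>v1\<bar>+\<bar>v2\<bar>+\<bar>v3\<bar>+\<bar>v4\<bar>"
  unfolding norm4 by (rule sqrt_le4)

lemma norm3_le: "norm ((v1,v2,v3)::real\<times>real\<times>real) \<le> \<bar>v1\<bar>+\<bar>v2\<bar>+\<bar>v3\<bar>"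
  using norm4_le[of v1 v2 v3 0] unfolding norm4 norm3 by simp

lemma key:
  fixes a b c d x1 x2 x3 x4 y1 y2 y3 y4 R r N G :: real
  assumes det: "a*d-b*c=1" "x1*x4-x2*x3=1" "y1*y4-y2*y3=1"
    and bd: "\<bar>a\<bar>\<le>R" "\<bar>b\<bar>\<le>R" "\<bar>c\<bar>\<le>R" "\<bar>d\<bar>\<le>R"
    and uN: "\<bar>x1-y1\<bar>\<le>N" "\<bar>x2-y2\<bar>\<le>N" "\<bar>x3-y3\<bar>\<le>N" "\<bar>x4-y4\<bar>\<le>N"
    and Ns: "N \<le> \<bar>x1-y1\<bar>+\<bar>x2-y2\<bar>+\<bar>x3-y3\<bar>+\<bar>x4-y4\<bar>"
    and ex: "\<bar>a-x1\<bar>\<le>r" "\<bar>b-x2\<bar>\<le>r" "\<bar>c-x3\<bar>\<le>r" "\<bar>d-x4\<bar>\<le>r"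
    and ey: "\<bar>a-y1\<bar>\<le>r" "\<bar>b-y2\<bar>\<le>r" "\<bar>c-y3\<bar>\<le>r" "\<bar>d-y4\<bar>\<le>r"
    and rR: "16*R*r \<le> 1" "r \<ge> 0"
    and GA: "\<bar>c*x4 - d*x3 - (c*y4 - d*y3)\<bar> \<le> G"
    and GB: "\<bar>a*x4 - b*x3 + c*x2 - d*x1 - (a*y4 - b*y3 + c*y2 - d*y1)\<bar> \<le> G"
    and GC: "\<bar>a*x2 - b*x1 - (a*y2 - b*y1)\<bar> \<le> G"
  shows "N \<le> 12*R*G"
proof -
  define u1 u2 u3 u4 where "u1 = x1-y1" "u2 = x2-y2" "u3 = x3-y3" "u4 = x4-y4"
  define e1 e2 e3 e4 where "e1 = (a-x1)+(a-y1)" "e2 = (b-x2)+(b-y2)" "e3 = (c-x3)+(c-y3)" "e4 = (d-x4)+(d-y4)"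
  define \<alpha> \<beta> \<gamma> \<delta> where "\<alpha> = u1*d - u2*c" "\<beta> = a*u2 - b*u1" "\<gamma> = u3*d - u4*c" "\<delta> = a*u4 - b*u3"
  have R0: "R \<ge> 0" using bd by auto
  have u1e: "u1 = \<alpha>*a + \<beta>*c"
  proof -
    have "\<alpha>*a + \<beta>*c = u1*(a*d-b*c)" unfolding \<alpha>_\<beta>_\<gamma>_\<delta>_def by algebra
    then show ?thesis using det by simp
  qed
  have u2e: "u2 = \<alpha>*b + \<beta>*d"
  proof -
    have "\<alpha>*b + \<beta>*d = u2*(a*d-b*c)" unfolding \<alpha>_\<beta>_\<gamma>_\<delta>_def by algebra
    then show ?thesis using det by simp
  qed
  have u3e: "u3 = \<gamma>*a + \<delta>*c"
  proof -
    have "\<gamma>*a + \<delta>*c = u3*(a*d-b*c)" unfolding \<alpha>_\<beta>_\<gamma>_\<delta>_def by algebra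
    then show ?thesis using det by simp
  qed
  have u4e: "u4 = \<gamma>*b + \<delta>*d"
  proof -
    have "\<gamma>*b + \<delta>*d = u4*(a*d-b*c)" unfolding \<alpha>_\<beta>_\<gamma>_\<delta>_def by algebra
    then show ?thesis using det by simp
  qed
  have Ag: "\<bar>\<gamma>\<bar> \<le> G"
  proof -
    have "\<gamma> = -(c*x4 - d*x3 - (c*y4 - d*y3))"
      unfolding \<alpha>_\<beta>_\<gamma>_\<delta>_def u1_u2_u3_u4_def by algebra
    then show ?thesis using GA by simp
  qed
  have Cg: "\<bar>\<beta>\<bar> \<le> G"
  proof -
    have "\<beta> = a*x2 - b*x1 - (a*y2 - b*y1)"
      unfolding \<alpha>_\<beta>_\<gamma>_\<delta>_def u1_u2_u3_u4_def by algebra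
    then show ?thesis using GC by simp
  qed
  have Bg: "\<bar>\<delta> - \<alpha>\<bar> \<le> G"
  proof -
    have "\<delta> - \<alpha> = a*x4 - b*x3 + c*x2 - d*x1 - (a*y4 - b*y3 + c*y2 - d*y1)"
      unfolding \<alpha>_\<beta>_\<gamma>_\<delta>_def u1_u2_u3_u4_def by algebra
    then show ?thesis using GB by simp
  qed
  have P0: "e1*u4 + e4*u1 - e2*u3 - e3*u2 = 2*(\<alpha>+\<delta>)"
  proof -
    have "e1*u4 + e4*u1 - e2*u3 - e3*u2 = 2*(\<alpha>+\<delta>) - 2*(x1*x4-x2*x3) + 2*(y1*y4-y2*y3)"
      unfolding \<alpha>_\<beta>_\<gamma>_\<delta>_def u1_u2_u3_u4_def e1_e2_e3_e4_def by algebra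
    then show ?thesis using det by simp
  qed
  have eb: "\<bar>e1\<bar> \<le> 2*r" "\<bar>e2\<bar> \<le> 2*r" "\<bar>e3\<bar> \<le> 2*r" "\<bar>e4\<bar> \<le> 2*r"
    unfolding e1_e2_e3_e4_def using ex ey by auto
  have ub: "\<bar>u1\<bar> \<le> N" "\<bar>u2\<bar> \<le> N" "\<bar>u3\<bar> \<le> N" "\<bar>u4\<bar> \<le> N" using uN u1_u2_u3_u4_def by auto
  have pb: "\<bar>e\<bar>*\<bar>u\<bar> \<le> 2*r*N" if "\<bar>e\<bar> \<le> 2*r" "\<bar>u\<bar> \<le> N" for e u :: real
    using mult_mono[OF that] rR(2) by simp
  have "\<bar>e1*u4 + e4*u1 - e2*u3 - e3*u2\<bar> \<le> \<bar>e1\<bar>*\<bar>u4\<bar> + \<bar>e4\<bar>*\<bar>u1\<bar> + \<bar>e2\<bar>*\<bar>u3\<bar> + \<bar>e3\<bar>*\<bar>u2\<bar>"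
    unfolding abs_mult[symmetric] by linarith
  also have "\<dots> \<le> 8*r*N" using pb[OF eb(1) ub(4)] pb[OF eb(4) ub(1)] pb[OF eb(2) ub(3)] pb[OF eb(3) ub(2)] by linarith
  finally have ad: "\<bar>\<alpha>+\<delta>\<bar> \<le> 4*r*N" using P0 by simp
  have mb: "\<bar>p*q + s*t\<bar> \<le> R*(\<bar>p\<bar>+\<bar>s\<bar>)" if "\<bar>q\<bar> \<le> R" "\<bar>t\<bar> \<le> R" for p q s t :: real
  proof -
    have "\<bar>p*q\<bar> \<le> \<bar>p\<bar>*R" using that by (simp add: abs_mult mult_left_mono)
    moreover have "\<bar>s*t\<bar> \<le> \<bar>s\<bar>*R" using that by (simp add: abs_mult mult_left_mono)
    ultimately show ?thesis by (simp add: algebra_simps)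
  qed
  have "N \<le> \<bar>u1\<bar>+\<bar>u2\<bar>+\<bar>u3\<bar>+\<bar>u4\<bar>" using Ns u1_u2_u3_u4_def by simp
  also have "\<dots> \<le> R*(\<bar>\<alpha>\<bar>+\<bar>\<beta>\<bar>) + R*(\<bar>\<alpha>\<bar>+\<bar>\<beta>\<bar>) + R*(\<bar>\<gamma>\<bar>+\<bar>\<delta>\<bar>) + R*(\<bar>\<gamma>\<bar>+\<bar>\<delta>\<bar>)"
  proof -
    have "\<bar>u1\<bar> \<le> R*(\<bar>\<alpha>\<bar>+\<bar>\<beta>\<bar>)" unfolding u1e by (rule mb[OF bd(1) bd(3)])
    moreover have "\<bar>u2\<bar> \<le> R*(\<bar>\<alpha>\<bar>+\<bar>\<beta>\<bar>)" unfolding u2e by (rule mb[OF bd(2) bd(4)])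
    moreover have "\<bar>u3\<bar> \<le> R*(\<bar>\<gamma>\<bar>+\<bar>\<delta>\<bar>)" unfolding u3e by (rule mb[OF bd(1) bd(3)])
    moreover have "\<bar>u4\<bar> \<le> R*(\<bar>\<gamma>\<bar>+\<bar>\<delta>\<bar>)" unfolding u4e by (rule mb[OF bd(2) bd(4)])
    ultimately show ?thesis by linarith
  qed
  also have "\<dots> = 2*R*(\<bar>\<alpha>\<bar>+\<bar>\<beta>\<bar>+\<bar>\<gamma>\<bar>+\<bar>\<delta>\<bar>)" by (simp add: algebra_simps)
  also have "\<dots> \<le> 2*R*(4*r*N + 3*G)"
  proof (rule mult_left_mono)
    show "\<bar>\<alpha>\<bar>+\<bar>\<beta>\<bar>+\<bar>\<gamma>\<bar>+\<bar>\<delta>\<bar> \<le> 4*r*N + 3*G" using ad Ag Bg Cg by linarith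
  qed (use R0 in simp)
  also have "\<dots> = (16*R*r)*(N/2) + 6*R*G" by (simp add: algebra_simps)
  also have "\<dots> \<le> N/2 + 6*R*G"
  proof -
    have "N \<ge> 0" using ub(1) by linarith
    then have "(16*R*r)*(N/2) \<le> 1*(N/2)" using rR by (intro mult_right_mono) auto
    then show ?thesis by simp
  qed
  finally show ?thesis by linarith
qed

lemma upper:
  fixes a b c d u1 u2 u3 u4 R N :: real
  assumes bd: "\<bar>a\<bar>\<le>R" "\<bar>b\<bar>\<le>R" "\<bar>c\<bar>\<le>R" "\<bar>d\<bar>\<le>R"
    and uN: "\<bar>u1\<bar>\<le>N" "\<bar>u2\<bar>\<le>N" "\<bar>u3\<bar>\<le>N" "\<bar>u4\<bar>\<le>N"
  shows "\<bar>c*u4 - d*u3\<bar> + \<bar>a*u4 - b*u3 + c*u2 - d*u1\<bar> + \<bar>a*u2 - b*u1\<bar> \<le> 12*R*N"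
proof -
  have pb: "\<bar>p*q\<bar> \<le> R*N" if "\<bar>p\<bar> \<le> R" "\<bar>q\<bar> \<le> N" for p q :: real
    using mult_mono[OF that] order_trans[OF abs_ge_zero that(1)] by (simp add: abs_mult)
  have "\<bar>c*u4 - d*u3\<bar> + \<bar>a*u4 - b*u3 + c*u2 - d*u1\<bar> + \<bar>a*u2 - b*u1\<bar> \<le>
     \<bar>c*u4\<bar> + \<bar>d*u3\<bar> + \<bar>a*u4\<bar> + \<bar>b*u3\<bar> + \<bar>c*u2\<bar> + \<bar>d*u1\<bar> + \<bar>a*u2\<bar> + \<bar>b*u1\<bar>"
    by linarith
  also have "\<dots> \<le> 8*(R*N)"
    using pb[OF bd(3) uN(4)] pb[OF bd(4) uN(3)] pb[OF bd(1) uN(4)] pb[OF bd(2) uN(3)]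
      pb[OF bd(3) uN(2)] pb[OF bd(4) uN(1)] pb[OF bd(1) uN(2)] pb[OF bd(2) uN(1)] by linarith
  also have "\<dots> \<le> 12*R*N"
  proof -
    have "0 \<le> R*N" using bd uN by (metis abs_ge_zero order_trans zero_le_mult_iff)
    then show ?thesis by (simp add: mult.commute)
  qed
  finally show ?thesis .
qed

theorem lemma2p5:
  fixes R :: real
  assumes "R \<ge> 1"
  shows "\<exists>\<rho>0 K0. \<rho>0 > 0 \<and> K0 \<ge> 1 \<and>
    (\<forall>l\<in>L_SL2 R. bilipschitz_on K0 {l'\<in>L_SL2 R. dist l l' < \<rho>0} (Fmap l))"
proof (intro exI conjI ballI)
  show "1/(16*R) > 0" using assms by simp
  show "12*R \<ge> 1" using assms by simp
  fix l assume lL: "l \<in> L_SL2 R"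
  obtain a b c d where ld: "l = (a,b,c,d)" by (cases l) auto
  have det: "a*d-b*c = 1" and nl: "norm (a,b,c,d) < R" using lL unfolding ld L_SL2_def by auto
  have bd: "\<bar>a\<bar>\<le>R" "\<bar>b\<bar>\<le>R" "\<bar>c\<bar>\<le>R" "\<bar>d\<bar>\<le>R"
    by (rule comp4_lt[OF nl])+
  show "bilipschitz_on (12*R) {l'\<in>L_SL2 R. dist l l' < 1/(16*R)} (Fmap l)"
    unfolding bilipschitz_on_def
  proof (intro ballI conjI)
    fix x y assume xS: "x \<in> {l'\<in>L_SL2 R. dist l l' < 1/(16*R)}" and yS: "y \<in> {l'\<in>L_SL2 R. dist l l' < 1/(16*R)}"
    obtain x1 x2 x3 x4 where xd: "x = (x1,x2,x3,x4)" by (cases x) auto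
    obtain y1 y2 y3 y4 where yd: "y = (y1,y2,y3,y4)" by (cases y) auto
    have detx: "x1*x4-x2*x3 = 1" and dx: "norm (a-x1,b-x2,c-x3,d-x4) < 1/(16*R)"
      using xS unfolding xd ld L_SL2_def by (auto simp: dist_norm)
    have dety: "y1*y4-y2*y3 = 1" and dy: "norm (a-y1,b-y2,c-y3,d-y4) < 1/(16*R)"
      using yS unfolding yd ld L_SL2_def by (auto simp: dist_norm)
    define N where "N = norm (x1-y1,x2-y2,x3-y3,x4-y4)"
    define G where "G = norm (c*x4 - d*x3 - (c*y4 - d*y3),
       a*x4 - b*x3 + c*x2 - d*x1 - (a*y4 - b*y3 + c*y2 - d*y1), a*x2 - b*x1 - (a*y2 - b*y1))"
    have dxy: "dist x y = N" unfolding N_def xd yd by (simp add: dist_norm)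
    have dF: "dist (Fmap l x) (Fmap l y) = G" unfolding G_def xd yd ld Fmap_def by (simp add: dist_norm)
    have uN: "\<bar>x1-y1\<bar>\<le>N" "\<bar>x2-y2\<bar>\<le>N" "\<bar>x3-y3\<bar>\<le>N" "\<bar>x4-y4\<bar>\<le>N"
      unfolding N_def by (rule comp4)+
    have Ns: "N \<le> \<bar>x1-y1\<bar>+\<bar>x2-y2\<bar>+\<bar>x3-y3\<bar>+\<bar>x4-y4\<bar>" unfolding N_def by (rule norm4_le)
    have ex: "\<bar>a-x1\<bar>\<le>1/(16*R)" "\<bar>b-x2\<bar>\<le>1/(16*R)" "\<bar>c-x3\<bar>\<le>1/(16*R)" "\<bar>d-x4\<bar>\<le>1/(16*R)"
      by (rule comp4_lt[OF dx])+
    have ey: "\<bar>a-y1\<bar>\<le>1/(16*R)" "\<bar>b-y2\<bar>\<le>1/(16*R)" "\<bar>c-y3\<bar>\<le>1/(16*R)" "\<bar>d-y4\<bar>\<le>1/(16*R)"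
      by (rule comp4_lt[OF dy])+
    have rR: "16*R*(1/(16*R)) \<le> 1" "1/(16*R) \<ge> 0" using assms by auto
    have GG: "\<bar>c*x4 - d*x3 - (c*y4 - d*y3)\<bar> \<le> G"
       "\<bar>a*x4 - b*x3 + c*x2 - d*x1 - (a*y4 - b*y3 + c*y2 - d*y1)\<bar> \<le> G"
       "\<bar>a*x2 - b*x1 - (a*y2 - b*y1)\<bar> \<le> G" unfolding G_def by (rule comp3)+
    have "N \<le> 12*R*G" by (rule key[OF det detx dety bd uN Ns ex ey rR GG])
    then show "dist x y / (12*R) \<le> dist (Fmap l x) (Fmap l y)" unfolding dxy dF
      using assms by (simp add: divide_le_eq mult.commute)
    have "G \<le> \<bar>c*x4 - d*x3 - (c*y4 - d*y3)\<bar> + \<bar>a*x4 - b*x3 + c*x2 - d*x1 - (a*y4 - b*y3 + c*y2 - d*y1)\<bar>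
       + \<bar>a*x2 - b*x1 - (a*y2 - b*y1)\<bar>" unfolding G_def by (rule norm3_le)
    also have "\<dots> = \<bar>c*(x4-y4) - d*(x3-y3)\<bar> + \<bar>a*(x4-y4) - b*(x3-y3) + c*(x2-y2) - d*(x1-y1)\<bar>
       + \<bar>a*(x2-y2) - b*(x1-y1)\<bar>" by (simp add: algebra_simps)
    also have "\<dots> \<le> 12*R*N" by (rule upper[OF bd uN])
    finally show "dist (Fmap l x) (Fmap l y) \<le> 12*R * dist x y" unfolding dxy dF .
  qed
qed

end
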